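(* Let $\gamma$ be a connected braid of $S^1\times\mathbb{D}^2$ with $|n_\gamma|\ge2$. Then every canonical solenoid map associated to $\gamma$ belongs to $\mathcal{U}^{part.hyp}_\gamma$. In particular $\mathcal{U}^{part.hyp}_\gamma$ is non-empty.
   Context: $S^1=\mathbb{R}/\mathbb{Z}$, $\mathbb{D}^2$ the closed unit disk. A connected braid $\gamma$ is (the isotopy class of) an embedding $S^1\to S^1\times\mathbb{D}^2$ transverse to the disks $\{\theta\}\times\mathbb{D}^2$, with $n=n_\gamma\ne0$ the degree of the covering induced by projection to $S^1$. A canonical solenoid map associated to $\gamma$ is built as follows: choose a representative of the braid of the form $t\mapsto(n t, z(t))$, and $\delta>0$ such that for all $t$, $d(z(t),\partial\mathbb{D}^2)>2\delta$, and such that $t_1\ne t_2$, $nt_1=nt_2$ in $S^1$ imply $d(z(t_1),z(t_2))>2\delta$; then $f_{\gamma,\delta}(t,z)=(nt,\delta z+z(t))$. $\mathcal{U}_\gamma$: $C^1$ embeddings $f:S^1\times\mathbb{D}^2\to\mathrm{Int}(S^1\times\mathbb{D}^2)$ with $f(S^1\times\{0\})$ isotopic to $\gamma$. $\mathcal{C}_\alpha(x)=\{(u_1,u_2)\in\mathbb{R}\times\mathbb{R}^2:|u_2|\le\alpha|u_1|\}$. $\mathcal{U}^{part.hyp}_\gamma$: those $f\in\mathcal{U}_\gamma$ with $\alpha>0$, integer $\ell\ge1$, $\lambda>1$ such that $Df^\ell(\mathcal{C}_\alpha(x))\subset\mathcal{C}_\beta(f^\ell(x))$ for some $\beta<\alpha$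 and $|v_1|\ge\lambda|u_1|$ whenever $u\in\mathcal{C}_\alpha(x)$, $Df^\ell u=(v_1,v_2)$. *)

theory Defs
  imports "HOL-Analysis.Analysis"
begin

text \<open>S^1 = R/Z. A point of the solid torus S^1 x D^2 is represented by a
lift (t, z) :: real \<times> complex with cmod z \<le> 1; two lifts represent the same point
iff their first coordinates differ by an integer and the second coordinates agree.
Maps of the solid torus are represented by lifts F : real \<times> complex \<Rightarrow> real \<times> complex
that descend to the quotient. Tangent vectors are (u1, u2) :: real \<times> complex,
i.e. elements of R \<times> R^2 in the natural coordinates of S^1 x D^2.\<close>

definition ST :: "(real \<times> complex) set" where
  "ST = {x. cmod (snd x) \<le> 1}"

definition same_pt :: "real \<times> complex \<Rightarrow> real \<times> complex \<Rightarrow> bool" where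
  "same_pt x y \<longleftrightarrow> fst x - fst y \<in> \<int> \<and> snd x = snd y"

definition descends :: "(real \<times> complex \<Rightarrow> real \<times> complex) \<Rightarrow> bool" where
  "descends F \<longleftrightarrow> (\<forall>x\<in>ST. \<forall>y\<in>ST. same_pt x y \<longrightarrow> same_pt (F x) (F y))"

definition C1_on_ST :: "(real \<times> complex \<Rightarrow> real \<times> complex) \<Rightarrow> bool" where
  "C1_on_ST F \<longleftrightarrow> (\<exists>F' :: real \<times> complex \<Rightarrow> (real \<times> complex) \<Rightarrow>\<^sub>L (real \<times> complex).
      continuous_on ST F' \<and>
      (\<forall>x\<in>ST. (F has_derivative blinfun_apply (F' x)) (at x within ST)))"

definition C1_embedding_into_interior :: "(real \<times> complex \<Rightarrow> real \<times> complex) \<Rightarrow> bool" where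
  "C1_embedding_into_interior F \<longleftrightarrow>
     descends F \<and> C1_on_ST F \<and>
     (\<forall>x\<in>ST. \<forall>D. (F has_derivative D) (at x within ST) \<longrightarrow> inj D) \<and>
     (\<forall>x\<in>ST. \<forall>y\<in>ST. same_pt (F x) (F y) \<longrightarrow> same_pt x y) \<and>
     (\<forall>x\<in>ST. cmod (snd (F x)) < 1)"

text \<open>Lift c : R \<rightarrow> R \<times> C of a C^1 embedding S^1 \<rightarrow> S^1 x D^2 whose S^1-component has degree k.\<close>
definition closed_curve_emb :: "(real \<Rightarrow> real \<times> complex) \<Rightarrow> int \<Rightarrow> bool" where
  "closed_curve_emb c k \<longleftrightarrow>
     (\<exists>c'. continuous_on UNIV c' \<and> (\<forall>t. (c has_vector_derivative c' t) (at t) \<and> c' t \<noteq> 0)) \<and>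
     (\<forall>t. c (t + 1) = c t + (of_int k, 0)) \<and>
     (\<forall>t. c t \<in> ST) \<and>
     (\<forall>s t. same_pt (c s) (c t) \<longrightarrow> s - t \<in> \<int>)"

text \<open>Connected braid: an embedding S^1 \<rightarrow> S^1 x D^2 transverse to the disks {\<theta>} x D^2;
its degree is n_\<gamma> = k.\<close>
definition braid :: "(real \<Rightarrow> real \<times> complex) \<Rightarrow> int \<Rightarrow> bool" where
  "braid c k \<longleftrightarrow> closed_curve_emb c k \<and> k \<noteq> 0 \<and>
     (\<forall>t v. (c has_vector_derivative v) (at t) \<longrightarrow> fst v \<noteq> 0)"

text \<open>C^1 isotopy of (parametrised) embeddings S^1 \<rightarrow> S^1 x D^2; lifts of the end curve
are identified up to deck translations.\<close>
definition curve_isotopic :: "(real \<Rightarrow> real \<times> complex) \<Rightarrow> (real \<Rightarrow> real \<times> complex) \<Rightarrow> bool" where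
  "curve_isotopic c1 c2 \<longleftrightarrow>
     (\<exists>H :: real \<Rightarrow> real \<Rightarrow> real \<times> complex. \<exists>H'. \<exists>k.
        (\<forall>s\<in>{0..1}. closed_curve_emb (H s) k) \<and>
        continuous_on ({0..1} \<times> UNIV) (\<lambda>(s, t). H s t) \<and>
        continuous_on ({0..1} \<times> UNIV) (\<lambda>(s, t). H' s t) \<and>
        (\<forall>s\<in>{0..1}. \<forall>t. (H s has_vector_derivative H' s t) (at t)) \<and>
        H 0 = c1 \<and> (\<exists>m::int. \<forall>t. H 1 t = c2 t + (of_int m, 0)))"

definition in_U :: "(real \<times> complex \<Rightarrow> real \<times> complex) \<Rightarrow> (real \<Rightarrow> real \<times> complex) \<Rightarrow> bool" where
  "in_U F c \<longleftrightarrow> C1_embedding_into_interior F \<and> curve_isotopic (\<lambda>t. F (t, 0)) c"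

definition cone :: "real \<Rightarrow> (real \<times> complex) set" where
  "cone \<alpha> = {u. cmod (snd u) \<le> \<alpha> * \<bar>fst u\<bar>}"

definition in_U_parthyp :: "(real \<times> complex \<Rightarrow> real \<times> complex) \<Rightarrow> (real \<Rightarrow> real \<times> complex) \<Rightarrow> bool" where
  "in_U_parthyp F c \<longleftrightarrow> in_U F c \<and>
     (\<exists>\<alpha>>0. \<exists>l::nat. l \<ge> 1 \<and> (\<exists>lam>1.
        \<forall>x\<in>ST. \<forall>D. ((F ^^ l) has_derivative D) (at x within ST) \<longrightarrow>
          (\<exists>\<beta><\<alpha>. D ` cone \<alpha> \<subseteq> cone \<beta>) \<and>
          (\<forall>u\<in>cone \<alpha>. \<bar>fst (D u)\<bar> \<ge> lam * \<bar>fst u\<bar>)))"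

definition solenoid :: "int \<Rightarrow> (real \<Rightarrow> complex) \<Rightarrow> real \<Rightarrow> real \<times> complex \<Rightarrow> real \<times> complex" where
  "solenoid n zc \<delta> = (\<lambda>(t, z). (of_int n * t, complex_of_real \<delta> * z + zc t))"

end

theory Submission imports Defs begin

lemma convex_ST: "convex ST"
proof -
  have "ST = UNIV \<times> cball 0 1" by (auto simp: ST_def)
  thus ?thesis using convex_Times[OF convex_UNIV convex_cball] by metis
qed

lemma deriv_dir_eq:
  fixes f :: "real \<times> complex \<Rightarrow> real \<times> complex"
  assumes S: "convex S" and x: "x \<in> S" and y: "y \<in> S"
    and d1: "(f has_derivative D1) (at x within S)"
    and d2: "(f has_derivative D2) (at x within S)"
  shows "D1 (y - x) = D2 (y - x)"
proof -
  define g where "g = (\<lambda>h::real. x + h *\<^sub>R (y - x))"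
  have gS: "g ` {0..1} \<subseteq> S"
  proof
    fix p assume "p \<in> g ` {0..1}"
    then obtain h where h: "h \<in> {0..1}" "p = g h" by auto
    have "p = (1 - h) *\<^sub>R x + h *\<^sub>R y" using h by (simp add: g_def algebra_simps)
    thus "p \<in> S" using S x y h convexD_alt by fastforce
  qed
  have g0: "g 0 = x" by (simp add: g_def)
  have gd: "(g has_derivative (\<lambda>h. h *\<^sub>R (y - x))) (at 0 within {0..1})"
    unfolding g_def by (auto intro!: derivative_eq_intros)
  have "((f \<circ> g) has_derivative (D1 \<circ> (\<lambda>h. h *\<^sub>R (y - x)))) (at 0 within {0..1})"
    by (rule diff_chain_within[OF gd]) (use has_derivative_subset[OF d1[folded g0] gS] in auto)
  moreover have "((f \<circ> g) has_derivative (D2 \<circ> (\<lambda>h. h *\<^sub>R (y - x)))) (at 0 within {0..1})"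
    by (rule diff_chain_within[OF gd]) (use has_derivative_subset[OF d2[folded g0] gS] in auto)
  ultimately have "D1 \<circ> (\<lambda>h. h *\<^sub>R (y - x)) = D2 \<circ> (\<lambda>h. h *\<^sub>R (y - x))"
    using frechet_derivative_unique_within_closed_interval[of 0 1 0 "f \<circ> g"] by (simp add: cbox_interval)
  from fun_cong[OF this, of 1] show ?thesis by simp
qed

lemma deriv_unique_ST:
  fixes f :: "real \<times> complex \<Rightarrow> real \<times> complex"
  assumes x: "x \<in> ST"
    and d1: "(f has_derivative D1) (at x within ST)"
    and d2: "(f has_derivative D2) (at x within ST)"
  shows "D1 = D2"
proof -
  interpret l1: linear D1 using has_derivative_linear[OF d1] .
  interpret l2: linear D2 using has_derivative_linear[OF d2] .
  define E where "E = (\<lambda>u. D1 u - D2 u)"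
  have El: "linear E" unfolding E_def by (intro linear_compose_sub) (simp_all add: l1.linear_axioms l2.linear_axioms)
  interpret E: linear E by (rule El)
  have key: "E (y - x) = 0" if "y \<in> ST" for y
    using deriv_dir_eq[OF convex_ST x that d1 d2] by (simp add: E_def)
  obtain t z where xtz: "x = (t, z)" by (cases x)
  have z1: "cmod z \<le> 1" using x xtz by (simp add: ST_def)
  have e1: "E (1, 0) = 0" using key[of "(t + 1, z)"] z1 by (simp add: ST_def xtz)
  have ea: "E (0, a - z) = 0" if "cmod a \<le> 1" for a using key[of "(t, a)"] that by (simp add: ST_def xtz)
  have e0: "E (0, - z) = 0" using ea[of 0] by simp
  have eb: "E (0, a) = 0" if "cmod a \<le> 1" for a
  proof -
    have "(0::real, a) = (0, a - z) - (0, - z)" by simp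
    hence "E (0, a) = E (0, a - z) - E (0, - z)" by (metis E.diff)
    thus ?thesis using ea[OF that] e0 by simp
  qed
  have ec: "E (0, w) = 0" for w
  proof -
    define r where "r = cmod w + 1"
    have r: "r > 0" unfolding r_def by (smt (verit) norm_ge_zero)
    have "cmod (w / of_real r) \<le> 1" using r by (simp add: norm_divide r_def)
    hence "E (0, w / of_real r) = 0" by (rule eb)
    moreover have "(0::real, w) = r *\<^sub>R (0, w / of_real r)" using r by (simp add: scaleR_conv_of_real)
    ultimately show ?thesis by (metis E.scale scale_zero_right)
  qed
  have "E u = 0" for u
  proof -
    obtain u1 u2 where u: "u = (u1, u2)" by (cases u)
    have "u = u1 *\<^sub>R (1, 0) + (0, u2)" by (simp add: u)
    hence "E u = u1 *\<^sub>R E (1, 0) + E (0, u2)" by (metis E.add E.scale)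
    thus ?thesis using e1 ec by simp
  qed
  thus ?thesis by (auto simp: E_def fun_eq_iff)
qed

lemma infdist_sphere_le:
  fixes w :: complex
  assumes "cmod w \<le> 1"
  shows "infdist w (sphere 0 1) \<le> 1 - cmod w"
proof (cases "w = 0")
  case True
  have "infdist w (sphere 0 1) \<le> dist w 1" by (rule infdist_le) simp
  thus ?thesis using True by simp
next
  case False
  have "infdist w (sphere 0 1) \<le> dist w (w / of_real (cmod w))"
    by (rule infdist_le) (use False in \<open>simp add: norm_divide\<close>)
  also have "w / of_real (cmod w) = w * of_real (1 / cmod w)" by (simp add: divide_inverse)
  also have "dist w (w * of_real (1 / cmod w)) = cmod (w * (1 - of_real (1 / cmod w)))"
    by (simp add: dist_norm algebra_simps)
  also have "\<dots> = cmod w * \<bar>1 - 1 / cmod w\<bar>"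
    by (metis norm_mult norm_of_real of_real_1 of_real_diff)
  also have "\<dots> = 1 - cmod w"
  proof -
    have p: "cmod w > 0" using False by simp
    hence "1 / cmod w \<ge> 1" using assms by simp
    hence "\<bar>1 - 1 / cmod w\<bar> = 1 / cmod w - 1" by simp
    thus ?thesis using p by (simp add: right_diff_distrib)
  qed
  finally show ?thesis .
qed

lemma cont_dom:
  fixes S :: "'a::metric_space set" and g :: "'a \<Rightarrow> 'b::metric_space" and h :: "'a \<Rightarrow> 'c::metric_space"
  assumes "continuous_on S g" "\<And>x y. dist (h x) (h y) \<le> dist (g x) (g y)"
  shows "continuous_on S h"
proof (rule continuous_on_iff[THEN iffD2], intro ballI allI impI)
  fix x e assume "x \<in> S" "(0::real) < e"
  then obtain d where "d > 0" "\<forall>x'\<in>S. dist x' x < d \<longrightarrow> dist (g x') (g x) < e"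
    using assms(1) unfolding continuous_on_iff by blast
  thus "\<exists>d>0. \<forall>x'\<in>S. dist x' x < d \<longrightarrow> dist (h x') (h x) < e"
    using assms(2) le_less_trans by blast
qed

theorem mainTheorem10:
  fixes c :: "real \<Rightarrow> real \<times> complex" and n :: int
    and zc :: "real \<Rightarrow> complex" and \<delta> :: real
  assumes "braid c n"
    and "\<bar>n\<bar> \<ge> 2"
    and "braid (\<lambda>t. (of_int n * t, zc t)) n"
    and "curve_isotopic (\<lambda>t. (of_int n * t, zc t)) c"
    and "\<delta> > 0"
    and "\<forall>t. infdist (zc t) (sphere 0 1) > 2 * \<delta>"
    and "\<forall>t1 t2. t1 - t2 \<notin> \<int> \<and> of_int n * t1 - of_int n * t2 \<in> \<int> \<longrightarrow>
           dist (zc t1) (zc t2) > 2 * \<delta>"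
  shows "in_U_parthyp (solenoid n zc \<delta>) c \<and> (\<exists>F. in_U_parthyp F c)"
proof -
  define F where "F = solenoid n zc \<delta>"
  have Fform: "F = (\<lambda>x. (of_int n * fst x, complex_of_real \<delta> * snd x + zc (fst x)))"
    by (simp add: F_def solenoid_def fun_eq_iff split_beta)
  have n0: "n \<noteq> 0" using assms(2) by auto
  from assms(3) obtain c' where c'cont: "continuous_on UNIV c'"
    and c'der: "\<And>t. ((\<lambda>t. (of_int n * t, zc t)) has_vector_derivative c' t) (at t)"
    and per: "\<And>t. (of_int n * (t + 1), zc (t + 1)) = (of_int n * t, zc t) + (of_int n, 0)"
    and inST: "\<And>t. (of_int n * t, zc t) \<in> ST"
    unfolding braid_def closed_curve_emb_def by blast
  define zd where "zd t = snd (c' t)" for t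
  have zc_der: "(zc has_derivative (\<lambda>h. h *\<^sub>R zd t)) (at t)" for t
    using has_derivative_snd[OF c'der[of t, unfolded has_vector_derivative_def]]
    by (simp add: zd_def)
  have zd_cont: "continuous_on UNIV zd"
    unfolding zd_def by (intro continuous_on_snd c'cont)
  have per1: "zc (t + 1) = zc t" for t using per[of t] by simp
  have zc1: "cmod (zc t) \<le> 1" for t using inST[of t] by (simp add: ST_def)
  have per_nat: "zc (s + of_nat k) = zc s" for s k
  proof (induction k)
    case (Suc k)
    have "zc (s + of_nat (Suc k)) = zc ((s + of_nat k) + 1)" by (simp add: ac_simps)
    also have "\<dots> = zc (s + of_nat k)" by (rule per1)
    finally show ?case using Suc by simp
  qed simp
  have per_int: "zc (s + of_int m) = zc s" for s m
  proof (cases "m \<ge> 0")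
    case True
    then show ?thesis using per_nat[of s "nat m"] by simp
  next
    case False
    then have "zc (s + of_int m + of_nat (nat (- m))) = zc (s + of_int m)" using per_nat by blast
    then show ?thesis using False by simp
  qed
  have zd_per: "zd (t + of_int m) = zd t" for t m
  proof -
    have "((\<lambda>s. s + of_int m) has_vector_derivative 1) (at t)"
      by (auto intro!: derivative_eq_intros)
    moreover have "(zc has_vector_derivative zd (t + of_int m)) (at ((\<lambda>s. s + of_int m) t))"
      using zc_der unfolding has_vector_derivative_def by simp
    ultimately have "((zc \<circ> (\<lambda>s. s + of_int m)) has_vector_derivative 1 *\<^sub>R zd (t + of_int m)) (at t)"
      by (rule vector_diff_chain_at)
    moreover have "zc \<circ> (\<lambda>s. s + of_int m) = zc" by (simp add: fun_eq_iff per_int)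
    ultimately have "(zc has_vector_derivative zd (t + of_int m)) (at t)" by simp
    moreover have "(zc has_vector_derivative zd t) (at t)"
      using zc_der unfolding has_vector_derivative_def by simp
    ultimately show ?thesis using vector_derivative_unique_at by blast
  qed
  obtain M where M: "\<And>t. cmod (zd t) \<le> M"
  proof -
    have "compact (zd ` {0..1})"
      by (rule compact_continuous_image) (auto intro: continuous_on_subset[OF zd_cont])
    then obtain B where B: "\<forall>y\<in>zd ` {0..1}. norm y \<le> B"
      using compact_imp_bounded bounded_iff by metis
    have "cmod (zd t) \<le> B" for t
    proof -
      have "zd t = zd ((t - of_int \<lfloor>t\<rfloor>) + of_int \<lfloor>t\<rfloor>)" by simp
      also have "\<dots> = zd (t - of_int \<lfloor>t\<rfloor>)" by (rule zd_per)
      moreover have "t - of_int \<lfloor>t\<rfloor> \<in> {0..1}"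
        using frac_ge_0[of t] frac_lt_1[of t] by (simp add: frac_def)
      ultimately show ?thesis using B by auto
    qed
    thus ?thesis using that by blast
  qed
  have M0: "M \<ge> 0" using M[of 0] norm_ge_zero order_trans by blast
  have zc_small: "cmod (zc t) < 1 - 2 * \<delta>" for t
  proof -
    have "infdist (zc t) (sphere 0 1) > 2 * \<delta>" using assms(6) by blast
    thus ?thesis using infdist_sphere_le[OF zc1[of t]] by linarith
  qed
  have \<delta>half: "\<delta> < 1 / 2" using zc_small[of 0] norm_ge_zero[of "zc 0"] by linarith
  define D0 where "D0 t = (\<lambda>u::real \<times> complex. (of_int n * fst u, complex_of_real \<delta> * snd u + fst u *\<^sub>R zd t))" for t
  have Fder: "(F has_derivative D0 (fst x)) (at x)" for x
  proof -
    have zf: "((\<lambda>x. zc (fst x)) has_derivative (\<lambda>u. fst u *\<^sub>R zd (fst x))) (at x)"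
      using has_derivative_compose[OF has_derivative_fst[OF has_derivative_ident] zc_der[of "fst x"]]
      by simp
    show ?thesis unfolding Fform D0_def
      by (auto intro!: derivative_eq_intros zf)
  qed
  have D0bl: "bounded_linear (D0 t)" for t
    using has_derivative_bounded_linear[OF Fder[of "(t, 0)"]] by simp
  have Dunique: "D = D0 (fst x)" if "x \<in> ST" "(F has_derivative D) (at x within ST)" for x D
    using deriv_unique_ST[OF that(1) that(2) has_derivative_at_withinI[OF Fder]] .
  have descF: "descends F"
    unfolding descends_def
  proof (intro ballI impI)
    fix x y assume "x \<in> ST" "y \<in> ST" and sp: "same_pt x y"
    then obtain m where m: "fst x - fst y = of_int m" unfolding same_pt_def by (auto elim: Ints_cases)
    have "of_int n * fst x - of_int n * fst y = of_int (n * m)" using m by (simp add: right_diff_distrib[symmetric])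
    moreover have "zc (fst x) = zc (fst y)" using per_int[of "fst y" m] m by (simp add: algebra_simps)
    ultimately show "same_pt (F x) (F y)" using sp unfolding same_pt_def Fform by simp
  qed
  define F' where "F' (x::real \<times> complex) = Blinfun (D0 (fst x))" for x
  have F'app: "blinfun_apply (F' x) = D0 (fst x)" for x
    unfolding F'_def by (rule bounded_linear_Blinfun_apply[OF D0bl])
  have F'dist: "dist (F' x) (F' y) \<le> dist (zd (fst x)) (zd (fst y))" for x y
  proof -
    have "norm (F' x - F' y) \<le> cmod (zd (fst x) - zd (fst y))"
    proof (rule norm_blinfun_bound)
      fix u :: "real \<times> complex"
      have "blinfun_apply (F' x - F' y) u = (0, fst u *\<^sub>R (zd (fst x) - zd (fst y)))"
        by (simp add: blinfun.diff_left F'app D0_def algebra_simps)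
      hence "norm (blinfun_apply (F' x - F' y) u) = \<bar>fst u\<bar> * cmod (zd (fst x) - zd (fst y))"
        by (simp add: norm_Pair)
      also have "\<dots> \<le> norm u * cmod (zd (fst x) - zd (fst y))"
        by (intro mult_right_mono) (metis norm_fst_le prod.collapse real_norm_def, simp)
      finally show "norm (blinfun_apply (F' x - F' y) u) \<le> cmod (zd (fst x) - zd (fst y)) * norm u"
        by (simp add: mult.commute)
    qed simp
    thus ?thesis by (simp add: dist_norm)
  qed
  have C1: "C1_on_ST F"
    unfolding C1_on_ST_def
  proof (intro exI conjI ballI)
    show "continuous_on ST F'"
      by (rule cont_dom[where g = "\<lambda>x. zd (fst x)"])
         (auto intro!: continuous_on_compose2[OF zd_cont] continuous_intros simp: F'dist)
    fix x assume "x \<in> ST"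
    show "(F has_derivative blinfun_apply (F' x)) (at x within ST)"
      unfolding F'app by (rule has_derivative_at_withinI[OF Fder])
  qed
  have injD: "inj D" if "x \<in> ST" "(F has_derivative D) (at x within ST)" for x D
  proof -
    have "D = D0 (fst x)" by (rule Dunique[OF that])
    moreover have "inj (D0 t)" for t
    proof (rule injI)
      fix u v assume "D0 t u = D0 t v"
      hence e1: "of_int n * fst u = of_int n * fst v"
        and e2: "complex_of_real \<delta> * snd u + fst u *\<^sub>R zd t = complex_of_real \<delta> * snd v + fst v *\<^sub>R zd t"
        by (auto simp: D0_def)
      from e1 n0 have "fst u = fst v" by simp
      with e2 have "complex_of_real \<delta> * snd u = complex_of_real \<delta> * snd v" by simp
      with assms(5) have "snd u = snd v" by simp
      with \<open>fst u = fst v\<close> show "u = v" by (simp add: prod_eq_iff)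
    qed
    ultimately show ?thesis by simp
  qed
  have injF: "same_pt x y" if "x \<in> ST" "y \<in> ST" "same_pt (F x) (F y)" for x y
  proof -
    obtain t1 z1 t2 z2 where xy: "x = (t1, z1)" "y = (t2, z2)" by (cases x, cases y)
    have z1: "cmod z1 \<le> 1" and z2: "cmod z2 \<le> 1" using that xy by (auto simp: ST_def)
    have h1: "of_int n * t1 - of_int n * t2 \<in> \<int>"
      and h2: "complex_of_real \<delta> * z1 + zc t1 = complex_of_real \<delta> * z2 + zc t2"
      using that(3) by (auto simp: same_pt_def Fform xy)
    show ?thesis
    proof (cases "t1 - t2 \<in> \<int>")
      case True
      then obtain m where m: "t1 - t2 = of_int m" by (auto elim: Ints_cases)
      have "zc t1 = zc t2" using per_int[of t2 m] m by (simp add: algebra_simps)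
      with h2 assms(5) have "z1 = z2" by simp
      with True show ?thesis by (simp add: same_pt_def xy)
    next
      case False
      hence "dist (zc t1) (zc t2) > 2 * \<delta>" using assms(7) h1 by blast
      moreover have "zc t1 - zc t2 = complex_of_real \<delta> * (z2 - z1)" using h2 by (simp add: algebra_simps)
      hence "dist (zc t1) (zc t2) = \<delta> * cmod (z2 - z1)" using assms(5) by (simp add: dist_norm norm_mult)
      moreover have "cmod (z2 - z1) \<le> 2" using norm_triangle_ineq4[of z2 z1] z1 z2 by linarith
      moreover have "\<delta> * cmod (z2 - z1) \<le> \<delta> * 2"
        using \<open>cmod (z2 - z1) \<le> 2\<close> assms(5) by (intro mult_left_mono) auto
      ultimately show ?thesis by linarith
    qed
  qed
  have intF: "cmod (snd (F x)) < 1" if "x \<in> ST" for x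
  proof -
    have "cmod (snd (F x)) \<le> cmod (complex_of_real \<delta> * snd x) + cmod (zc (fst x))"
      unfolding Fform by (simp add: norm_triangle_ineq)
    also have "cmod (complex_of_real \<delta> * snd x) = \<delta> * cmod (snd x)" using assms(5) by (simp add: norm_mult)
    also have "\<delta> * cmod (snd x) \<le> \<delta>" using that assms(5) by (simp add: ST_def mult_left_le)
    finally show ?thesis using zc_small[of "fst x"] assms(5) by linarith
  qed
  have emb: "C1_embedding_into_interior F"
    unfolding C1_embedding_into_interior_def using descF C1 injD injF intF by blast
  have iso: "curve_isotopic (\<lambda>t. F (t, 0)) c"
    using assms(4) by (simp add: Fform)
  define \<alpha> where "\<alpha> = M + 1"
  define \<beta> where "\<beta> = (\<delta> * \<alpha> + M) / \<bar>of_int n\<bar>"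
  have nr: "\<bar>of_int n :: real\<bar> \<ge> 2" using assms(2) by linarith
  have \<alpha>pos: "\<alpha> > 0" using M0 by (simp add: \<alpha>_def)
  have \<beta>\<alpha>: "\<beta> < \<alpha>"
  proof -
    have "\<delta> * \<alpha> + M < \<bar>of_int n\<bar> * \<alpha>"
    proof -
      have "\<delta> * \<alpha> \<le> \<alpha> / 2" using \<delta>half \<alpha>pos by simp
      moreover have "2 * \<alpha> \<le> \<bar>of_int n\<bar> * \<alpha>" using nr \<alpha>pos by (simp add: mult_right_mono)
      ultimately show ?thesis using M0 \<alpha>_def by linarith
    qed
    thus ?thesis using nr \<alpha>pos by (simp add: \<beta>_def divide_less_eq mult.commute)
  qed
  have hyp: "(\<exists>\<beta><\<alpha>. D ` cone \<alpha> \<subseteq> cone \<beta>) \<and> (\<forall>u\<in>cone \<alpha>. \<bar>fst (D u)\<bar> \<ge> 2 * \<bar>fst u\<bar>)"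
    if "x \<in> ST" "((F ^^ 1) has_derivative D) (at x within ST)" for x D
  proof -
    have D: "D = D0 (fst x)" using Dunique[OF that(1)] that(2) by simp
    have exp: "\<bar>fst (D u)\<bar> \<ge> 2 * \<bar>fst u\<bar>" for u
      using nr by (simp add: D D0_def abs_mult mult_right_mono)
    have "D ` cone \<alpha> \<subseteq> cone \<beta>"
    proof
      fix v assume "v \<in> D ` cone \<alpha>"
      then obtain u where u: "u \<in> cone \<alpha>" "v = D u" by auto
      have uc: "cmod (snd u) \<le> \<alpha> * \<bar>fst u\<bar>" using u by (simp add: cone_def)
      have "cmod (snd v) \<le> cmod (complex_of_real \<delta> * snd u) + cmod (fst u *\<^sub>R zd (fst x))"
        using norm_triangle_ineq[of "complex_of_real \<delta> * snd u" "fst u *\<^sub>R zd (fst x)"]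
        by (simp add: u D D0_def)
      also have "\<dots> = \<delta> * cmod (snd u) + \<bar>fst u\<bar> * cmod (zd (fst x))"
        using assms(5) by (simp add: norm_mult)
      also have "\<dots> \<le> \<delta> * (\<alpha> * \<bar>fst u\<bar>) + \<bar>fst u\<bar> * M"
        using uc M[of "fst x"] assms(5) by (intro add_mono mult_left_mono) auto
      also have "\<dots> = \<beta> * (\<bar>of_int n\<bar> * \<bar>fst u\<bar>)"
        using nr by (simp add: \<beta>_def field_simps)
      also have "\<dots> = \<beta> * \<bar>fst v\<bar>" by (simp add: u D D0_def abs_mult)
      finally show "v \<in> cone \<beta>" by (simp add: cone_def)
    qed
    thus ?thesis using \<beta>\<alpha> exp by blast
  qed
  have "in_U_parthyp F c"
    unfolding in_U_parthyp_def in_U_def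
    using emb iso \<alpha>pos hyp by (intro conjI exI[of _ \<alpha>] exI[of _ "1::nat"] exI[of _ "2::real"]) auto
  thus ?thesis unfolding F_def by blast
qed

end
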